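(* Let $\mathbf{u}$ be a $1$-balanced sequence over $\{a,b\}$, let $\mathbf{a}=1^{\omega}$ (the constant sequence $111\cdots$), and let $\mathbf{b}=b_0b_1b_2\cdots$ be a $1$-balanced sequence over $\{2,3\}$. Then the ternary sequence $\mathbf{v}=\mathrm{colour}(\mathbf{u},\mathbf{a},\mathbf{b})$ is $2$-balanced.
   Context: A sequence $\mathbf{u}$ over an alphabet $\mathcal A$ is $C$-balanced ($C\ge 1$ an integer) if for any two factors $u,v$ of $\mathbf{u}$ with $|u|=|v|$ and every letter $x\in\mathcal A$ we have $\bigl||u|_x-|v|_x\bigr|\le C$, where $|w|_x$ is the number of occurrences of $x$ in $w$. Colouring: given a sequence $\mathbf{u}$ over $\{a,b\}$ and sequences $\mathbf{a},\mathbf{b}$ over disjoint alphabets $\mathcal A,\mathcal B$, $\mathrm{colour}(\mathbf{u},\mathbf{a},\mathbf{b})$ is the sequence over $\mathcal A\cup\mathcal B$ obtained from $\mathbf{u}$ by replacing the subsequence of all occurrences of $a$ (in order) by the sequence $\mathbf{a}$ and the subsequence of all occurrences of $b$ (in order) by the sequence $\mathbf{b}$. *)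

theory Defs
  imports Main
begin

text \<open>Infinite sequences are functions nat => letter. The factor of length n starting
  at position i is w i, ..., w (i+n-1).\<close>

definition occ :: "(nat \<Rightarrow> 'a) \<Rightarrow> 'a \<Rightarrow> nat \<Rightarrow> nat \<Rightarrow> nat" where
  "occ w x i n = card {k. i \<le> k \<and> k < i + n \<and> w k = x}"

definition balanced :: "nat \<Rightarrow> (nat \<Rightarrow> 'a) \<Rightarrow> bool" where
  "balanced C w \<longleftrightarrow>
     (\<forall>i j n x. \<bar>int (occ w x i n) - int (occ w x j n)\<bar> \<le> int C)"

text \<open>colour u a b sa sb: the k-th occurrence of letter a in u is replaced by sa k,
  the k-th occurrence of letter b by sb k (counting from 0).\<close>
definition colour :: "(nat \<Rightarrow> 'a) \<Rightarrow> 'a \<Rightarrow> 'a \<Rightarrow> (nat \<Rightarrow> 'c) \<Rightarrow> (nat \<Rightarrow> 'c) \<Rightarrow> nat \<Rightarrow> 'c" where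
  "colour u a b sa sb n =
     (if u n = a then sa (card {k. k < n \<and> u k = a}) else sb (card {k. k < n \<and> u k = b}))"

end

theory Submission
  imports Defs
begin

lemma occ_0[simp]: "occ w x i 0 = 0"
  unfolding occ_def by simp

lemma occ_Suc: "occ w x i (Suc n) = occ w x i n + (if w (i+n) = x then 1 else 0)"
proof -
  have fin: "finite {k. i \<le> k \<and> k < i + n \<and> w k = x}" by simp
  show ?thesis
  proof (cases "w (i+n) = x")
    case True
    have "{k. i \<le> k \<and> k < i + Suc n \<and> w k = x} = insert (i+n) {k. i \<le> k \<and> k < i + n \<and> w k = x}"
      using True by auto
    then show ?thesis unfolding occ_def using True fin by simp
  next
    case False
    have "{k. i \<le> k \<and> k < i + Suc n \<and> w k = x} = {k. i \<le> k \<and> k < i + n \<and> w k = x}"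
      using False by (auto simp: less_Suc_eq)
    then show ?thesis unfolding occ_def using False by simp
  qed
qed

lemma occ_add: "occ w x i (n1+n2) = occ w x i n1 + occ w x (i+n1) n2"
  by (induction n2) (simp_all add: occ_Suc add.assoc)

lemma card_prefix: "card {k. k < n \<and> u k = b} = occ u b 0 n"
  unfolding occ_def by simp

lemma occ_v_other:
  assumes "\<forall>n. u n \<in> {a, b}" "a \<noteq> b" "x \<noteq> (1::nat)"
  shows "occ (colour u a b (\<lambda>_. 1::nat) bs) x i n = occ bs x (occ u b 0 i) (occ u b i n)"
proof (induction n)
  case 0 then show ?case by simp
next
  case (Suc n)
  have add: "occ u b 0 (i+n) = occ u b 0 i + occ u b i n"
    using occ_add[of u b 0 i n] by simp
  show ?case
  proof (cases "u (i+n) = a")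
    case True
    then show ?thesis using Suc assms by (simp add: occ_Suc colour_def)
  next
    case False
    then have "u (i+n) = b" using assms by auto
    then show ?thesis using Suc assms False add
      by (simp add: occ_Suc colour_def card_prefix)
  qed
qed

lemma occ_v_one:
  assumes "\<forall>n. u n \<in> {a, b}" "a \<noteq> b" "\<forall>n. bs n \<in> {2, 3}"
  shows "occ (colour u a b (\<lambda>_. 1::nat) bs) 1 i n = occ u a i n"
proof (induction n)
  case 0 then show ?case by simp
next
  case (Suc n)
  have "bs k \<noteq> 1" for k using assms(3) by (metis insertE numeral_One numeral_eq_iff semiring_norm(85) semiring_norm(86) singletonD)
  then show ?case using Suc by (simp add: occ_Suc colour_def)
qed

lemma occ_Suc_bounds: "occ w x p m \<le> occ w x p (Suc m)" "occ w x p (Suc m) \<le> occ w x p m + 1"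
  by (simp_all add: occ_Suc)

lemma diff2:
  assumes "balanced 1 w" "m' \<le> m+1" "m \<le> m'+1"
  shows "\<bar>int (occ w x p m) - int (occ w x q m')\<bar> \<le> 2"
proof -
  have B: "\<bar>int (occ w x i n) - int (occ w x j n)\<bar> \<le> 1" for i j n
    using assms(1) unfolding balanced_def by simp
  consider "m' = m" | "m' = Suc m" | "m = Suc m'" using assms by linarith
  then show ?thesis
  proof cases
    case 1 then show ?thesis using B[of p m q] by simp
  next
    case 2 then show ?thesis using B[of p m q] occ_Suc_bounds[of w x q m] by simp
  next
    case 3 then show ?thesis using B[of p m' q] occ_Suc_bounds[of w x p m'] by simp
  qed
qed

theorem lemma1:
  fixes u :: "nat \<Rightarrow> 'a" and a b :: 'a and bs :: "nat \<Rightarrow> nat"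
  assumes "a \<noteq> b"
    and "\<forall>n. u n \<in> {a, b}"
    and "balanced 1 u"
    and "\<forall>n. bs n \<in> {2, 3}"
    and "balanced 1 bs"
  shows "balanced 2 (colour u a b (\<lambda>_. 1::nat) bs)"
  unfolding balanced_def
proof (intro allI)
  fix i j n and x :: nat
  let ?v = "colour u a b (\<lambda>_. 1::nat) bs"
  have Bu: "\<And>y i' j' n'. \<bar>int (occ u y i' n') - int (occ u y j' n')\<bar> \<le> 1"
    using assms(3) unfolding balanced_def by simp
  show "\<bar>int (occ ?v x i n) - int (occ ?v x j n)\<bar> \<le> int 2"
  proof (cases "x = 1")
    case True
    then show ?thesis using occ_v_one[OF assms(2,1,4)] Bu[where y=a and i'=i and j'=j and n'=n] by simp
  next
    case False
    have "\<bar>int (occ bs x (occ u b 0 i) (occ u b i n)) - int (occ bs x (occ u b 0 j) (occ u b j n))\<bar> \<le> 2"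
      apply (rule diff2[OF assms(5)]) using Bu[where y=b and i'=i and j'=j and n'=n] by linarith+
    then show ?thesis using occ_v_other[OF assms(2,1) False] by simp
  qed
qed

end
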